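(* For any sets $X,Y$, the map $(-)^\dagger:(X\to\mathcal W(Y))\to(\mathcal W(X)\to\mathcal W(Y))$ is Scott continuous, where function spaces carry the pointwise order.
   Context: $\mathcal A=\langle U,+,\cdot,\mathbf 0,\mathbf 1\rangle$ is a partial semiring ($+$ commutative, associative, possibly partial, unit $\mathbf 0$; $\cdot$ total, associative, unit $\mathbf 1$; two-sided distributivity; $\mathbf 0$ annihilates), naturally ordered ($u\le v$ iff $\exists w.\,u+w=v$ is a partial order), Scott continuous (for every directed $D\subseteq U$ and $y$: $\sup_{x\in D}(x+y)=(\sup D)+y$, $\sup_{x\in D}(x\cdot y)=(\sup D)\cdot y$, $\sup_{x\in D}(y\cdot x)=y\cdot\sup D$), with a top element. Infinite sums are suprema of finite partial sums. $\mathcal W(X)$: maps $m:X\to U$ with countable support $\mathrm{supp}(m)=\{x:m(x)\neq\mathbf 0\}$ and defined mass $\sum_{x\in\mathrm{supp}(m)}m(x)$, ordered by $m_1\sqsubseteq m_2$ iff $m_1+m=m_2$ for some $m$ (operations pointwise). Functions $f,g:X\to\mathcal W(Y)$ are ordered by $f\sqsubseteq^\bullet g$ iff $f(x)\sqsubseteq g(x)$ for all $x$; similarly for functions $\mathcal W(X)\to\mathcal W(Y)$. $f^\dagger(m)(y)=\sum_{x\in\mathrm{supp}(m)}m(x)\cdot f(x)(y)$. Scott continuous means preserving suprema of directed sets. *)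

theory Defs
  imports Main "HOL-Library.Countable_Set"
begin

definition partial_semiring ::
  "('u \<Rightarrow> 'u \<Rightarrow> 'u option) \<Rightarrow> ('u \<Rightarrow> 'u \<Rightarrow> 'u) \<Rightarrow> 'u \<Rightarrow> 'u \<Rightarrow> bool" where
  "partial_semiring add mul z one \<longleftrightarrow>
     (\<forall>a b. add a b = add b a) \<and>
     (\<forall>a b c. Option.bind (add a b) (\<lambda>s. add s c) = Option.bind (add b c) (\<lambda>s. add a s)) \<and>
     (\<forall>a. add a z = Some a) \<and>
     (\<forall>a b c. mul (mul a b) c = mul a (mul b c)) \<and>
     (\<forall>a. mul one a = a \<and> mul a one = a) \<and>
     (\<forall>a b c s. add b c = Some s \<longrightarrow>
        add (mul a b) (mul a c) = Some (mul a s) \<and> add (mul b a) (mul c a) = Some (mul s a)) \<and>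
     (\<forall>a. mul z a = z \<and> mul a z = z)"

definition ps_le :: "('u \<Rightarrow> 'u \<Rightarrow> 'u option) \<Rightarrow> 'u \<Rightarrow> 'u \<Rightarrow> bool" where
  "ps_le add u v \<longleftrightarrow> (\<exists>w. add u w = Some v)"

definition lub_wrt :: "('a \<Rightarrow> 'a \<Rightarrow> bool) \<Rightarrow> 'a set \<Rightarrow> 'a set \<Rightarrow> 'a \<Rightarrow> bool" where
  "lub_wrt le C A s \<longleftrightarrow> s \<in> C \<and> (\<forall>a\<in>A. le a s) \<and> (\<forall>b\<in>C. (\<forall>a\<in>A. le a b) \<longrightarrow> le s b)"

definition directed_wrt :: "('a \<Rightarrow> 'a \<Rightarrow> bool) \<Rightarrow> 'a set \<Rightarrow> bool" where
  "directed_wrt le D \<longleftrightarrow> D \<noteq> {} \<and> (\<forall>a\<in>D. \<forall>b\<in>D. \<exists>c\<in>D. le a c \<and> le b c)"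

definition naturally_ordered :: "('u \<Rightarrow> 'u \<Rightarrow> 'u option) \<Rightarrow> bool" where
  "naturally_ordered add \<longleftrightarrow>
     (\<forall>u. ps_le add u u) \<and>
     (\<forall>u v w. ps_le add u v \<longrightarrow> ps_le add v w \<longrightarrow> ps_le add u w) \<and>
     (\<forall>u v. ps_le add u v \<longrightarrow> ps_le add v u \<longrightarrow> u = v)"

definition ps_scott_continuous ::
  "('u \<Rightarrow> 'u \<Rightarrow> 'u option) \<Rightarrow> ('u \<Rightarrow> 'u \<Rightarrow> 'u) \<Rightarrow> bool" where
  "ps_scott_continuous add mul \<longleftrightarrow>
     (\<forall>D. directed_wrt (ps_le add) D \<longrightarrow> (\<exists>s. lub_wrt (ps_le add) UNIV D s)) \<and>
     (\<forall>D s y. directed_wrt (ps_le add) D \<longrightarrow> lub_wrt (ps_le add) UNIV D s \<longrightarrow>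
        ((\<forall>x\<in>D. add x y \<noteq> None) \<longrightarrow>
           (\<exists>t. add s y = Some t \<and> lub_wrt (ps_le add) UNIV ((\<lambda>x. the (add x y)) ` D) t)) \<and>
        lub_wrt (ps_le add) UNIV ((\<lambda>x. mul x y) ` D) (mul s y) \<and>
        lub_wrt (ps_le add) UNIV ((\<lambda>x. mul y x) ` D) (mul y s))"

definition has_top :: "('u \<Rightarrow> 'u \<Rightarrow> 'u option) \<Rightarrow> bool" where
  "has_top add \<longleftrightarrow> (\<exists>t. \<forall>u. ps_le add u t)"

inductive fsum_rel :: "('u \<Rightarrow> 'u \<Rightarrow> 'u option) \<Rightarrow> 'u \<Rightarrow> ('a \<Rightarrow> 'u) \<Rightarrow> 'a set \<Rightarrow> 'u \<Rightarrow> bool"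
  for add z f where
  empty: "fsum_rel add z f {} z"
| insert: "fsum_rel add z f F s \<Longrightarrow> x \<notin> F \<Longrightarrow> add (f x) s = Some s' \<Longrightarrow>
           fsum_rel add z f (insert x F) s'"

definition has_psum :: "('u \<Rightarrow> 'u \<Rightarrow> 'u option) \<Rightarrow> 'u \<Rightarrow> ('a \<Rightarrow> 'u) \<Rightarrow> 'a set \<Rightarrow> 'u \<Rightarrow> bool" where
  "has_psum add z f A s \<longleftrightarrow>
     (\<forall>F. finite F \<and> F \<subseteq> A \<longrightarrow> (\<exists>t. fsum_rel add z f F t)) \<and>
     lub_wrt (ps_le add) UNIV {t. \<exists>F. finite F \<and> F \<subseteq> A \<and> fsum_rel add z f F t} s"

definition psum :: "('u \<Rightarrow> 'u \<Rightarrow> 'u option) \<Rightarrow> 'u \<Rightarrow> ('a \<Rightarrow> 'u) \<Rightarrow> 'a set \<Rightarrow> 'u" where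
  "psum add z f A = (THE s. has_psum add z f A s)"

definition supp :: "'u \<Rightarrow> ('a \<Rightarrow> 'u) \<Rightarrow> 'a set" where
  "supp z m = {x. m x \<noteq> z}"

definition Wset :: "('u \<Rightarrow> 'u \<Rightarrow> 'u option) \<Rightarrow> 'u \<Rightarrow> ('a \<Rightarrow> 'u) set" where
  "Wset add z = {m. countable (supp z m) \<and> (\<exists>s. has_psum add z m (supp z m) s)}"

definition W_le :: "('u \<Rightarrow> 'u \<Rightarrow> 'u option) \<Rightarrow> 'u \<Rightarrow> ('a \<Rightarrow> 'u) \<Rightarrow> ('a \<Rightarrow> 'u) \<Rightarrow> bool" where
  "W_le add z m1 m2 \<longleftrightarrow> (\<exists>m \<in> Wset add z. \<forall>x. add (m1 x) (m x) = Some (m2 x))"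

definition fun_le :: "('u \<Rightarrow> 'u \<Rightarrow> 'u option) \<Rightarrow> 'u \<Rightarrow> ('x \<Rightarrow> 'y \<Rightarrow> 'u) \<Rightarrow> ('x \<Rightarrow> 'y \<Rightarrow> 'u) \<Rightarrow> bool" where
  "fun_le add z f g \<longleftrightarrow> (\<forall>x. W_le add z (f x) (g x))"

definition kfun_le :: "('u \<Rightarrow> 'u \<Rightarrow> 'u option) \<Rightarrow> 'u \<Rightarrow>
    (('x \<Rightarrow> 'u) \<Rightarrow> 'y \<Rightarrow> 'u) \<Rightarrow> (('x \<Rightarrow> 'u) \<Rightarrow> 'y \<Rightarrow> 'u) \<Rightarrow> bool" where
  "kfun_le add z F G \<longleftrightarrow> (\<forall>m \<in> Wset add z. W_le add z (F m) (G m))"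

definition Kleisli_dom :: "('u \<Rightarrow> 'u \<Rightarrow> 'u option) \<Rightarrow> 'u \<Rightarrow> ('x \<Rightarrow> 'y \<Rightarrow> 'u) set" where
  "Kleisli_dom add z = {f. \<forall>x. f x \<in> Wset add z}"

definition Kleisli_cod :: "('u \<Rightarrow> 'u \<Rightarrow> 'u option) \<Rightarrow> 'u \<Rightarrow> (('x \<Rightarrow> 'u) \<Rightarrow> 'y \<Rightarrow> 'u) set" where
  "Kleisli_cod add z = {F. \<forall>m \<in> Wset add z. F m \<in> Wset add z}"

definition dagger :: "('u \<Rightarrow> 'u \<Rightarrow> 'u option) \<Rightarrow> ('u \<Rightarrow> 'u \<Rightarrow> 'u) \<Rightarrow> 'u \<Rightarrow>
    ('x \<Rightarrow> 'y \<Rightarrow> 'u) \<Rightarrow> ('x \<Rightarrow> 'u) \<Rightarrow> 'y \<Rightarrow> 'u" where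
  "dagger add mul z f m = (\<lambda>y. psum add z (\<lambda>x. mul (m x) (f x y)) (supp z m))"

end

theory Submission imports Defs begin

locale psr =
  fixes add :: "'u \<Rightarrow> 'u \<Rightarrow> 'u option" and mul :: "'u \<Rightarrow> 'u \<Rightarrow> 'u" and z one :: 'u
  assumes ps: "partial_semiring add mul z one" and nord: "naturally_ordered add"
    and scott: "ps_scott_continuous add mul" and htop: "has_top add"
begin

abbreviation le (infix "\<preceq>" 50) where "le a b \<equiv> ps_le add a b"

lemma add_comm: "add a b = add b a" using ps unfolding partial_semiring_def by blast
lemma add_assoc: "Option.bind (add a b) (\<lambda>s. add s c) = Option.bind (add b c) (\<lambda>s. add a s)"
  using ps unfolding partial_semiring_def by blast
lemma add_z[simp]: "add a z = Some a" using ps unfolding partial_semiring_def by blast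
lemma z_add[simp]: "add z a = Some a" using add_comm add_z by metis
lemma distl: "add b c = Some s \<Longrightarrow> add (mul a b) (mul a c) = Some (mul a s)"
  using ps unfolding partial_semiring_def by blast
lemma distr: "add b c = Some s \<Longrightarrow> add (mul b a) (mul c a) = Some (mul s a)"
  using ps unfolding partial_semiring_def by blast
lemma mul_z[simp]: "mul z a = z" "mul a z = z" using ps unfolding partial_semiring_def by blast+

lemma le_refl[simp]: "a \<preceq> a" using nord unfolding naturally_ordered_def by blast
lemma le_trans: "a \<preceq> b \<Longrightarrow> b \<preceq> c \<Longrightarrow> a \<preceq> c" using nord unfolding naturally_ordered_def by blast
lemma le_antisym: "a \<preceq> b \<Longrightarrow> b \<preceq> a \<Longrightarrow> a = b" using nord unfolding naturally_ordered_def by blast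
lemma z_le[simp]: "z \<preceq> a" unfolding ps_le_def by auto
lemma le_z: "a \<preceq> z \<Longrightarrow> a = z" using le_antisym z_le by blast
lemma add_le1: "add a b = Some c \<Longrightarrow> a \<preceq> c" unfolding ps_le_def by auto
lemma add_le2: "add a b = Some c \<Longrightarrow> b \<preceq> c" unfolding ps_le_def using add_comm by metis

lemma mul_mono_l: "a \<preceq> b \<Longrightarrow> mul c a \<preceq> mul c b"
  unfolding ps_le_def using distl by blast
lemma mul_mono_r: "a \<preceq> b \<Longrightarrow> mul a c \<preceq> mul b c"
  unfolding ps_le_def using distr by blast

definition addo :: "'u option \<Rightarrow> 'u option \<Rightarrow> 'u option" where
  "addo a b = (case a of None \<Rightarrow> None | Some x \<Rightarrow> (case b of None \<Rightarrow> None | Some y \<Rightarrow> add x y))"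

lemma addo_simps[simp]: "addo None b = None" "addo a None = None" "addo (Some x) (Some y) = add x y"
  unfolding addo_def by (auto split: option.splits)

lemma addo_Some: "addo a b = Some c \<longleftrightarrow> (\<exists>x y. a = Some x \<and> b = Some y \<and> add x y = Some c)"
  unfolding addo_def by (auto split: option.splits)

lemma cm: "comm_monoid addo (Some z)"
proof
  fix a b c :: "'u option"
  show "addo (addo a b) c = addo a (addo b c)"
  proof (cases a; cases b; cases c)
    fix x y w assume "a = Some x" "b = Some y" "c = Some w"
    then show ?thesis using add_assoc[of x y w] unfolding addo_def
      by (auto split: option.splits)
  qed auto
  show "addo a b = addo b a" unfolding addo_def using add_comm by (auto split: option.splits)
  show "addo a (Some z) = a" by (cases a) auto
qed

sublocale P: comm_monoid_set addo "Some z"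
  by (rule comm_monoid_set.intro[OF cm])

definition sm :: "('a \<Rightarrow> 'u) \<Rightarrow> 'a set \<Rightarrow> 'u option" where
  "sm f F = P.F (\<lambda>x. Some (f x)) F"

lemma sm_empty[simp]: "sm f {} = Some z" unfolding sm_def by simp
lemma sm_insert: "finite F \<Longrightarrow> x \<notin> F \<Longrightarrow> sm f (insert x F) = addo (Some (f x)) (sm f F)"
  unfolding sm_def by simp

lemma fsum_rel_iff: "fsum_rel add z f F s \<longleftrightarrow> finite F \<and> sm f F = Some s"
proof
  assume "fsum_rel add z f F s" then show "finite F \<and> sm f F = Some s"
    by induction (auto simp: sm_insert)
next
  assume "finite F \<and> sm f F = Some s"
  then have "finite F" "sm f F = Some s" by auto
  then show "fsum_rel add z f F s"
  proof (induction F arbitrary: s rule: finite_induct)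
    case empty then show ?case by (auto intro: fsum_rel.empty)
  next
    case (insert x F)
    then obtain t where "sm f F = Some t" "add (f x) t = Some s"
      by (auto simp: sm_insert addo_Some)
    then show ?case using insert by (auto intro: fsum_rel.insert)
  qed
qed

lemma add_mono1: "a \<preceq> a' \<Longrightarrow> add a' b = Some c' \<Longrightarrow> \<exists>c. add a b = Some c \<and> c \<preceq> c'"
proof -
  assume "a \<preceq> a'" "add a' b = Some c'"
  then obtain w where w: "add a w = Some a'" unfolding ps_le_def by auto
  have "addo (addo (Some a) (Some w)) (Some b) = Some c'" using w \<open>add a' b = Some c'\<close> by simp
  also have "addo (addo (Some a) (Some w)) (Some b) = addo (addo (Some a) (Some b)) (Some w)"
    by (metis P.assoc P.commute)
  finally obtain c where "add a b = Some c" "add c w = Some c'" by (auto simp: addo_Some)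
  then show ?thesis unfolding ps_le_def by auto
qed

lemma add_mono: "a \<preceq> a' \<Longrightarrow> b \<preceq> b' \<Longrightarrow> add a' b' = Some c' \<Longrightarrow> \<exists>c. add a b = Some c \<and> c \<preceq> c'"
proof -
  assume 1: "a \<preceq> a'" "b \<preceq> b'" "add a' b' = Some c'"
  obtain c1 where c1: "add a b' = Some c1" "c1 \<preceq> c'" using add_mono1 1 by blast
  obtain c where "add b a = Some c" "c \<preceq> c1" using add_mono1[OF 1(2)] c1 add_comm by metis
  then show ?thesis using c1 le_trans add_comm by metis
qed

lemma sm_mono: "finite F \<Longrightarrow> \<forall>x\<in>F. f x \<preceq> g x \<Longrightarrow> sm g F = Some t \<Longrightarrow> \<exists>s. sm f F = Some s \<and> s \<preceq> t"
proof (induction F arbitrary: t rule: finite_induct)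
  case empty then show ?case by (metis sm_empty option.inject le_refl)
next
  case (insert x F)
  then obtain t0 where t0: "sm g F = Some t0" "add (g x) t0 = Some t" by (auto simp: sm_insert addo_Some)
  then obtain s0 where "sm f F = Some s0" "s0 \<preceq> t0" using insert by auto
  moreover obtain c where "add (f x) s0 = Some c" "c \<preceq> t" using add_mono[OF _ \<open>s0 \<preceq> t0\<close> t0(2), of "f x"] insert by blast
  ultimately show ?case using insert by (auto simp: sm_insert)
qed

lemma sm_subset: "finite F' \<Longrightarrow> F \<subseteq> F' \<Longrightarrow> sm f F' = Some t \<Longrightarrow> \<exists>s. sm f F = Some s \<and> s \<preceq> t"
proof -
  assume a: "finite F'" "F \<subseteq> F'" "sm f F' = Some t"
  have "sm f F' = addo (sm f (F' - F)) (sm f F)" unfolding sm_def using P.subset_diff a by blast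
  then have "addo (sm f (F' - F)) (sm f F) = Some t" using a(3) by simp
  then obtain u v where "sm f (F' - F) = Some u" "sm f F = Some v" "add u v = Some t"
    unfolding addo_Some by blast
  then show ?thesis using add_le2 by blast
qed

lemma sm_mult_l: "finite F \<Longrightarrow> sm f F = Some s \<Longrightarrow> sm (\<lambda>x. mul c (f x)) F = Some (mul c s)"
proof (induction F arbitrary: s rule: finite_induct)
  case empty then show ?case by (metis sm_empty option.inject mul_z)
next
  case (insert x F)
  then obtain t0 where "sm f F = Some t0" "add (f x) t0 = Some s" by (auto simp: sm_insert addo_Some)
  then show ?case using insert distl by (auto simp: sm_insert)
qed

lemma sm_mult_r: "finite F \<Longrightarrow> sm f F = Some s \<Longrightarrow> sm (\<lambda>x. mul (f x) c) F = Some (mul s c)"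
proof (induction F arbitrary: s rule: finite_induct)
  case empty then show ?case by (metis sm_empty option.inject mul_z)
next
  case (insert x F)
  then obtain t0 where "sm f F = Some t0" "add (f x) t0 = Some s" by (auto simp: sm_insert addo_Some)
  then show ?case using insert distr by (auto simp: sm_insert)
qed

lemma sm_restrict: "finite F \<Longrightarrow> \<forall>x\<in>F - B. f x = z \<Longrightarrow> sm f F = sm f (F \<inter> B)"
  unfolding sm_def by (rule P.mono_neutral_right) auto

lemma sm_allz: "\<forall>x\<in>F. f x = z \<Longrightarrow> sm f F = Some z"
  unfolding sm_def by (rule P.neutral) auto

lemma sm_add: "\<forall>x\<in>F. add (a x) (b x) = Some (c x) \<Longrightarrow> sm c F = addo (sm a F) (sm b F)"
proof -
  assume h: "\<forall>x\<in>F. add (a x) (b x) = Some (c x)"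
  have "sm c F = P.F (\<lambda>x. addo (Some (a x)) (Some (b x))) F"
    unfolding sm_def using h by (intro P.cong) auto
  also have "\<dots> = addo (P.F (\<lambda>x. Some (a x)) F) (P.F (\<lambda>x. Some (b x)) F)" by (rule P.distrib)
  finally show ?thesis unfolding sm_def .
qed

lemma sm_cong: "\<forall>x\<in>F. f x = g x \<Longrightarrow> sm f F = sm g F"
  unfolding sm_def by (intro P.cong) auto

lemma lub_unique: "lub_wrt le UNIV A s \<Longrightarrow> lub_wrt le UNIV A t \<Longrightarrow> s = t"
  unfolding lub_wrt_def using le_antisym by blast

lemma lub_singleton: "lub_wrt le UNIV {a} a"
  unfolding lub_wrt_def by auto

lemma scott_sup: "directed_wrt le D \<Longrightarrow> \<exists>s. lub_wrt le UNIV D s"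
  using scott unfolding ps_scott_continuous_def by blast

lemma scott_add: "directed_wrt le D \<Longrightarrow> lub_wrt le UNIV D s \<Longrightarrow> \<forall>x\<in>D. add x y \<noteq> None \<Longrightarrow>
   \<exists>t. add s y = Some t \<and> lub_wrt le UNIV ((\<lambda>x. the (add x y)) ` D) t"
  using scott unfolding ps_scott_continuous_def by blast

lemma scott_mul_r: "directed_wrt le D \<Longrightarrow> lub_wrt le UNIV D s \<Longrightarrow>
   lub_wrt le UNIV ((\<lambda>x. mul x y) ` D) (mul s y)"
  using scott unfolding ps_scott_continuous_def by blast

lemma scott_mul_l: "directed_wrt le D \<Longrightarrow> lub_wrt le UNIV D s \<Longrightarrow>
   lub_wrt le UNIV ((\<lambda>x. mul y x) ` D) (mul y s)"
  using scott unfolding ps_scott_continuous_def by blast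

lemma lub_add2:
  assumes d1: "directed_wrt le D1" and d2: "directed_wrt le D2"
    and l1: "lub_wrt le UNIV D1 s1" and l2: "lub_wrt le UNIV D2 s2"
    and def: "\<forall>a\<in>D1. \<forall>c\<in>D2. add a c \<noteq> None"
  shows "\<exists>t. add s1 s2 = Some t \<and> (\<forall>a\<in>D1. \<forall>c\<in>D2. the (add a c) \<preceq> t) \<and>
     (\<forall>b. (\<forall>a\<in>D1. \<forall>c\<in>D2. the (add a c) \<preceq> b) \<longrightarrow> t \<preceq> b)"
proof -
  have A: "\<exists>ta. add s2 a = Some ta \<and> lub_wrt le UNIV ((\<lambda>c. the (add c a)) ` D2) ta" if "a \<in> D1" for a
    using scott_add[OF d2 l2] def that add_comm by metis
  then have "\<forall>a\<in>D1. add a s2 \<noteq> None" using add_comm by fastforce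
  then obtain t where t: "add s1 s2 = Some t" "lub_wrt le UNIV ((\<lambda>a. the (add a s2)) ` D1) t"
    using scott_add[OF d1 l1] by blast
  have up: "the (add a c) \<preceq> t" if "a \<in> D1" "c \<in> D2" for a c
  proof -
    obtain ta where ta: "add s2 a = Some ta" "lub_wrt le UNIV ((\<lambda>c. the (add c a)) ` D2) ta"
      using A \<open>a \<in> D1\<close> by blast
    have "the (add c a) \<preceq> ta" using ta(2) that(2) unfolding lub_wrt_def by blast
    then have "the (add a c) \<preceq> ta" using add_comm[of a c] by simp
    moreover have "the (add a s2) \<preceq> t" using t(2) that(1) unfolding lub_wrt_def by blast
    then have "ta \<preceq> t" using ta(1) add_comm[of a s2] by simp
    ultimately show ?thesis using le_trans by blast
  qed
  have least: "t \<preceq> b" if hb: "\<forall>a\<in>D1. \<forall>c\<in>D2. the (add a c) \<preceq> b" for b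
  proof -
    have "the (add a s2) \<preceq> b" if "a \<in> D1" for a
    proof -
      obtain ta where ta: "add s2 a = Some ta" "lub_wrt le UNIV ((\<lambda>c. the (add c a)) ` D2) ta"
        using A \<open>a \<in> D1\<close> by blast
      have "\<forall>c\<in>D2. the (add c a) \<preceq> b" using hb that add_comm by metis
      then have "ta \<preceq> b" using ta(2) unfolding lub_wrt_def by blast
      then show ?thesis using ta(1) add_comm[of a s2] by simp
    qed
    then show ?thesis using t(2) unfolding lub_wrt_def by blast
  qed
  show ?thesis using t up least by blast
qed

definition sums :: "('a \<Rightarrow> 'u) \<Rightarrow> 'a set \<Rightarrow> 'u set" where
  "sums f A = {t. \<exists>F. finite F \<and> F \<subseteq> A \<and> sm f F = Some t}"

lemma hp_iff: "has_psum add z f A s \<longleftrightarrow>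
   (\<forall>F. finite F \<and> F \<subseteq> A \<longrightarrow> sm f F \<noteq> None) \<and> lub_wrt le UNIV (sums f A) s"
proof -
  have e: "{t. \<exists>F. finite F \<and> F \<subseteq> A \<and> fsum_rel add z f F t} = sums f A"
    unfolding sums_def fsum_rel_iff by blast
  have e2: "(\<forall>F. finite F \<and> F \<subseteq> A \<longrightarrow> (\<exists>t. fsum_rel add z f F t)) \<longleftrightarrow>
     (\<forall>F. finite F \<and> F \<subseteq> A \<longrightarrow> sm f F \<noteq> None)"
    unfolding fsum_rel_iff not_None_eq by blast
  show ?thesis unfolding has_psum_def e e2 ..
qed

lemma sums_directed: "\<forall>F. finite F \<and> F \<subseteq> A \<longrightarrow> sm f F \<noteq> None \<Longrightarrow> directed_wrt le (sums f A)"
proof -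
  assume h: "\<forall>F. finite F \<and> F \<subseteq> A \<longrightarrow> sm f F \<noteq> None"
  have "finite {} \<and> {} \<subseteq> A \<and> sm f {} = Some z" by simp
  then have "z \<in> sums f A" unfolding sums_def by blast
  then have ne: "sums f A \<noteq> {}" by blast
  have "\<exists>c\<in>sums f A. a \<preceq> c \<and> b \<preceq> c" if ab: "a \<in> sums f A" "b \<in> sums f A" for a b
  proof -
    obtain F where F: "finite F" "F \<subseteq> A" "sm f F = Some a"
      using ab(1) unfolding sums_def by blast
    obtain G where G: "finite G" "G \<subseteq> A" "sm f G = Some b"
      using ab(2) unfolding sums_def by blast
    note FG = F G
    have fU: "finite (F \<union> G)" "F \<union> G \<subseteq> A" using FG by auto
    then obtain c where c: "sm f (F \<union> G) = Some c" using h by (cases "sm f (F \<union> G)") auto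
    then have "c \<in> sums f A" unfolding sums_def using fU by blast
    moreover have "a \<preceq> c" using sm_subset[OF fU(1) Un_upper1 c] FG(3) by auto
    moreover have "b \<preceq> c" using sm_subset[OF fU(1) Un_upper2 c] FG(6) by auto
    ultimately show ?thesis by blast
  qed
  then show ?thesis unfolding directed_wrt_def using ne by blast
qed

lemma hp_exists: "\<forall>F. finite F \<and> F \<subseteq> A \<longrightarrow> sm f F \<noteq> None \<Longrightarrow> \<exists>s. has_psum add z f A s"
proof -
  assume h: "\<forall>F. finite F \<and> F \<subseteq> A \<longrightarrow> sm f F \<noteq> None"
  obtain s where "lub_wrt le UNIV (sums f A) s" using scott_sup[OF sums_directed[OF h]] by blast
  then have "has_psum add z f A s" unfolding hp_iff using h by blast
  then show ?thesis by blast
qed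

lemma hp_lub: "has_psum add z f A s \<Longrightarrow> lub_wrt le UNIV (sums f A) s"
  by (simp add: hp_iff)

lemma hp_def: "has_psum add z f A s \<Longrightarrow> finite F \<Longrightarrow> F \<subseteq> A \<Longrightarrow> sm f F \<noteq> None"
  by (simp add: hp_iff)

lemma hp_unique: "has_psum add z f A s \<Longrightarrow> has_psum add z f A t \<Longrightarrow> s = t"
  by (rule lub_unique[OF hp_lub hp_lub])

lemma psum_eq: "has_psum add z f A s \<Longrightarrow> psum add z f A = s"
  unfolding psum_def using hp_unique by blast

lemma hp_le: "has_psum add z f A s \<Longrightarrow> finite F \<Longrightarrow> F \<subseteq> A \<Longrightarrow> \<exists>t. sm f F = Some t \<and> t \<preceq> s"
proof -
  assume h: "has_psum add z f A s" "finite F" "F \<subseteq> A"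
  obtain t where t: "sm f F = Some t" using hp_def[OF h] by auto
  then have "t \<in> sums f A" unfolding sums_def using h by blast
  then have "t \<preceq> s" using hp_lub[OF h(1)] unfolding lub_wrt_def by blast
  then show ?thesis using t by blast
qed

lemma hp_least: "has_psum add z f A s \<Longrightarrow> (\<And>F t. finite F \<Longrightarrow> F \<subseteq> A \<Longrightarrow> sm f F = Some t \<Longrightarrow> t \<preceq> b)
   \<Longrightarrow> s \<preceq> b"
proof -
  assume h: "has_psum add z f A s" and b: "\<And>F t. finite F \<Longrightarrow> F \<subseteq> A \<Longrightarrow> sm f F = Some t \<Longrightarrow> t \<preceq> b"
  have "\<forall>a\<in>sums f A. a \<preceq> b" unfolding sums_def using b by blast
  then show ?thesis using hp_lub[OF h] unfolding lub_wrt_def by blast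
qed

lemma hp_sub: "\<forall>x\<in>A. f x \<preceq> g x \<Longrightarrow> has_psum add z g A t \<Longrightarrow> \<exists>s. has_psum add z f A s \<and> s \<preceq> t"
proof -
  assume le: "\<forall>x\<in>A. f x \<preceq> g x" and hg: "has_psum add z g A t"
  have d: "\<exists>s. sm f F = Some s \<and> s \<preceq> t" if FA: "finite F" "F \<subseteq> A" for F
  proof -
    obtain u where "sm g F = Some u" "u \<preceq> t" using hp_le[OF hg FA] by blast
    then show ?thesis using sm_mono[OF \<open>finite F\<close>, of f g u] le FA le_trans by blast
  qed
  then have "\<forall>F. finite F \<and> F \<subseteq> A \<longrightarrow> sm f F \<noteq> None" by fastforce
  then obtain s where s: "has_psum add z f A s" using hp_exists by blast
  have "s \<preceq> t" by (rule hp_least[OF s]) (use d in force)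
  then show ?thesis using s by blast
qed

lemma hp_mult_r: "has_psum add z f A s \<Longrightarrow> has_psum add z (\<lambda>x. mul (f x) c) A (mul s c)"
proof -
  assume h: "has_psum add z f A s"
  then have d: "\<forall>F. finite F \<and> F \<subseteq> A \<longrightarrow> sm f F \<noteq> None" and l: "lub_wrt le UNIV (sums f A) s"
    unfolding hp_iff by auto
  have eq: "sums (\<lambda>x. mul (f x) c) A = (\<lambda>x. mul x c) ` sums f A"
  proof
    show "sums (\<lambda>x. mul (f x) c) A \<subseteq> (\<lambda>x. mul x c) ` sums f A"
    proof
      fix t assume "t \<in> sums (\<lambda>x. mul (f x) c) A"
      then obtain F where F: "finite F" "F \<subseteq> A" "sm (\<lambda>x. mul (f x) c) F = Some t" unfolding sums_def by blast
      then obtain u where u: "sm f F = Some u" using d by blast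
      then have "t = mul u c" using sm_mult_r[OF F(1) u] F by simp
      then show "t \<in> (\<lambda>x. mul x c) ` sums f A" using u F unfolding sums_def by blast
    qed
    show "(\<lambda>x. mul x c) ` sums f A \<subseteq> sums (\<lambda>x. mul (f x) c) A"
      unfolding sums_def using sm_mult_r by blast
  qed
  have "\<forall>F. finite F \<and> F \<subseteq> A \<longrightarrow> sm (\<lambda>x. mul (f x) c) F \<noteq> None" using d sm_mult_r by fastforce
  moreover have "lub_wrt le UNIV (sums (\<lambda>x. mul (f x) c) A) (mul s c)"
    unfolding eq using scott_mul_r[OF sums_directed[OF d] l] .
  ultimately show ?thesis unfolding hp_iff by (rule conjI)
qed

lemma hp_restrict: "B \<subseteq> A \<Longrightarrow> \<forall>x\<in>A - B. f x = z \<Longrightarrow> has_psum add z f A s \<longleftrightarrow> has_psum add z f B s"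
proof -
  assume BA: "B \<subseteq> A" and zz: "\<forall>x\<in>A - B. f x = z"
  have r: "sm f F = sm f (F \<inter> B)" if "finite F" "F \<subseteq> A" for F
    using sm_restrict[OF that(1)] zz that by blast
  have "sums f A = sums f B"
  proof
    show "sums f A \<subseteq> sums f B"
    proof
      fix t assume "t \<in> sums f A"
      then obtain F where F: "finite F" "F \<subseteq> A" "sm f F = Some t" unfolding sums_def by blast
      then have "sm f (F \<inter> B) = Some t" using r by simp
      moreover have "finite (F \<inter> B)" "F \<inter> B \<subseteq> B" using F by auto
      ultimately show "t \<in> sums f B" unfolding sums_def by blast
    qed
    show "sums f B \<subseteq> sums f A" unfolding sums_def using BA by blast
  qed
  moreover have "(\<forall>F. finite F \<and> F \<subseteq> A \<longrightarrow> sm f F \<noteq> None) \<longleftrightarrow> (\<forall>F. finite F \<and> F \<subseteq> B \<longrightarrow> sm f F \<noteq> None)"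
  proof
    assume "\<forall>F. finite F \<and> F \<subseteq> A \<longrightarrow> sm f F \<noteq> None"
    then show "\<forall>F. finite F \<and> F \<subseteq> B \<longrightarrow> sm f F \<noteq> None" using BA by blast
  next
    assume h: "\<forall>F. finite F \<and> F \<subseteq> B \<longrightarrow> sm f F \<noteq> None"
    show "\<forall>F. finite F \<and> F \<subseteq> A \<longrightarrow> sm f F \<noteq> None"
    proof (intro allI impI)
      fix F assume F: "finite F \<and> F \<subseteq> A"
      then have "sm f (F \<inter> B) \<noteq> None" using h by auto
      then show "sm f F \<noteq> None" using r F by simp
    qed
  qed
  ultimately show ?thesis unfolding hp_iff by simp
qed

lemma hp_allz: "\<forall>x\<in>A. f x = z \<Longrightarrow> has_psum add z f A z"
proof -
  assume h: "\<forall>x\<in>A. f x = z"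
  have a: "sm f F = Some z" if "F \<subseteq> A" for F using h that by (intro sm_allz) auto
  have "sums f A = {z}"
  proof
    show "sums f A \<subseteq> {z}" unfolding sums_def using a by auto
    have "finite {} \<and> {} \<subseteq> A \<and> sm f {} = Some z" by simp
    then show "{z} \<subseteq> sums f A" unfolding sums_def by blast
  qed
  moreover have "\<forall>F. finite F \<and> F \<subseteq> A \<longrightarrow> sm f F \<noteq> None" using a by auto
  ultimately show ?thesis unfolding hp_iff using lub_singleton by simp
qed

lemma hp_add:
  assumes ha: "has_psum add z a A sa" and hb: "has_psum add z b A sb" and hc: "has_psum add z c A sc"
    and ac: "\<forall>x\<in>A. add (a x) (b x) = Some (c x)"
  shows "add sa sb = Some sc"
proof -
  have sab: "sm c H = addo (sm a H) (sm b H)" if "H \<subseteq> A" for H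
    using ac that by (intro sm_add) auto
  have P: "\<exists>c'. add t1 t2 = Some c' \<and> c' \<preceq> sc" if t1: "t1 \<in> sums a A" and t2: "t2 \<in> sums b A" for t1 t2
  proof -
    obtain F where F: "finite F" "F \<subseteq> A" "sm a F = Some t1" using t1 unfolding sums_def by blast
    obtain G where G: "finite G" "G \<subseteq> A" "sm b G = Some t2" using t2 unfolding sums_def by blast
    have H: "finite (F \<union> G)" "F \<union> G \<subseteq> A" using F G by auto
    obtain tc where tc: "sm c (F \<union> G) = Some tc" "tc \<preceq> sc" using hp_le[OF hc H] by blast
    then have "addo (sm a (F \<union> G)) (sm b (F \<union> G)) = Some tc" using sab[OF H(2)] by simp
    then obtain ua ub where u: "sm a (F \<union> G) = Some ua" "sm b (F \<union> G) = Some ub" "add ua ub = Some tc"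
      unfolding addo_Some by blast
    have "t1 \<preceq> ua" using sm_subset[OF H(1) Un_upper1 u(1)] F(3) by auto
    moreover have "t2 \<preceq> ub" using sm_subset[OF H(1) Un_upper2 u(2)] G(3) by auto
    ultimately obtain c' where "add t1 t2 = Some c'" "c' \<preceq> tc" using add_mono u(3) by blast
    then show ?thesis using tc(2) le_trans by blast
  qed
  have d1: "directed_wrt le (sums a A)" by (rule sums_directed) (use hp_def[OF ha] in blast)
  have d2: "directed_wrt le (sums b A)" by (rule sums_directed) (use hp_def[OF hb] in blast)
  have df: "\<forall>t1\<in>sums a A. \<forall>t2\<in>sums b A. add t1 t2 \<noteq> None"
  proof (intro ballI)
    fix t1 t2 assume "t1 \<in> sums a A" "t2 \<in> sums b A"
    then obtain c' where "add t1 t2 = Some c'" using P by blast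
    then show "add t1 t2 \<noteq> None" by simp
  qed
  obtain t where t1: "add sa sb = Some t" and t2: "\<forall>t1\<in>sums a A. \<forall>t2\<in>sums b A. the (add t1 t2) \<preceq> t"
    and t3: "\<forall>b'. (\<forall>t1\<in>sums a A. \<forall>t2\<in>sums b A. the (add t1 t2) \<preceq> b') \<longrightarrow> t \<preceq> b'"
    using lub_add2[OF d1 d2 hp_lub[OF ha] hp_lub[OF hb] df] by (elim exE conjE)
  note t = t1 t2 t3
  have "\<forall>t1\<in>sums a A. \<forall>t2\<in>sums b A. the (add t1 t2) \<preceq> sc"
  proof (intro ballI)
    fix t1 t2 assume "t1 \<in> sums a A" "t2 \<in> sums b A"
    then obtain c' where "add t1 t2 = Some c'" "c' \<preceq> sc" using P by blast
    then show "the (add t1 t2) \<preceq> sc" by simp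
  qed
  then have 1: "t \<preceq> sc" using t3 by blast
  have 2: "sc \<preceq> t"
  proof (rule hp_least[OF hc])
    fix F tc assume F: "finite F" "F \<subseteq> A" "sm c F = Some tc"
    then have "addo (sm a F) (sm b F) = Some tc" using sab[OF F(2)] by simp
    then obtain ua ub where u: "sm a F = Some ua" "sm b F = Some ub" "add ua ub = Some tc"
      unfolding addo_Some by blast
    have "ua \<in> sums a A" "ub \<in> sums b A" unfolding sums_def using F u by blast+
    then have "the (add ua ub) \<preceq> t" using t(2) by blast
    then show "tc \<preceq> t" using u(3) by simp
  qed
  show ?thesis using t(1) le_antisym[OF 1 2] by simp
qed

lemma hp_swap:
  "finite F \<Longrightarrow> \<forall>y\<in>F. has_psum add z (\<lambda>x. h x y) A (p y) \<Longrightarrow> \<forall>x\<in>A. sm (h x) F = Some (q x) \<Longrightarrow>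
   has_psum add z q A s \<Longrightarrow> sm p F = Some s"
proof (induction F arbitrary: q s rule: finite_induct)
  case empty
  have "\<forall>x\<in>A. q x = z" using empty.prems(2) by simp
  then have "has_psum add z q A z" by (rule hp_allz)
  then have "s = z" using hp_unique empty.prems(3) by blast
  then show ?case by simp
next
  case (insert y F)
  define q' where "q' x = the (sm (h x) F)" for x
  have q': "sm (h x) F = Some (q' x) \<and> add (h x y) (q' x) = Some (q x)" if "x \<in> A" for x
  proof -
    have "addo (Some (h x y)) (sm (h x) F) = Some (q x)"
      using insert.prems(2) that sm_insert[OF insert.hyps(1,2)] by metis
    then obtain v where "sm (h x) F = Some v" "add (h x y) v = Some (q x)" unfolding addo_Some by blast
    then show ?thesis unfolding q'_def by simp
  qed
  have "\<forall>x\<in>A. q' x \<preceq> q x" using q' add_le2 by blast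
  then obtain s' where s': "has_psum add z q' A s'" using hp_sub insert.prems(3) by blast
  have IH: "sm p F = Some s'" using insert.IH[of q' s'] insert.prems(1) q' s' by blast
  have "add (p y) s' = Some s"
    by (rule hp_add[of "\<lambda>x. h x y" A "p y" q' s' q s]) (use insert.prems q' s' in auto)
  then show ?case using IH sm_insert[OF insert.hyps(1,2)] by simp
qed

lemma hp_sup:
  assumes I: "I \<noteq> {}"
    and dir: "\<forall>i\<in>I. \<forall>j\<in>I. \<exists>k\<in>I. \<forall>x\<in>A. \<phi> i x \<preceq> \<phi> k x \<and> \<phi> j x \<preceq> \<phi> k x"
    and lubs: "\<forall>x\<in>A. lub_wrt le UNIV ((\<lambda>i. \<phi> i x) ` I) (\<psi> x)"
    and hs: "has_psum add z \<psi> A s"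
    and bnd: "\<forall>i\<in>I. psum add z (\<phi> i) A \<preceq> b"
  shows "s \<preceq> b"
proof -
  have lepsi: "\<phi> i x \<preceq> \<psi> x" if "i \<in> I" "x \<in> A" for i x
    using lubs that unfolding lub_wrt_def by blast
  have hpi: "has_psum add z (\<phi> i) A (psum add z (\<phi> i) A)" if iI: "i \<in> I" for i
  proof -
    obtain si where "has_psum add z (\<phi> i) A si" using hp_sub[OF _ hs, of "\<phi> i"] lepsi iI by blast
    then show ?thesis using psum_eq[of "\<phi> i" A si] by simp
  qed
  have defi: "sm (\<phi> i) F = Some (the (sm (\<phi> i) F))" if "i \<in> I" "finite F" "F \<subseteq> A" for i F
    using hp_def[OF hpi[OF that(1)] that(2,3)] by auto
  have defpsi: "sm \<psi> F = Some (the (sm \<psi> F))" if "finite F" "F \<subseteq> A" for F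
    using hp_def[OF hs that] by auto
  have mono: "the (sm (\<phi> i) F) \<preceq> the (sm (\<phi> k) F)"
    if "i \<in> I" "k \<in> I" "finite F" "F \<subseteq> A" "\<forall>x\<in>A. \<phi> i x \<preceq> \<phi> k x" for i k F
  proof -
    have "\<forall>x\<in>F. \<phi> i x \<preceq> \<phi> k x" using that by blast
    from sm_mono[OF that(3) this defi[OF that(2-4)]] show ?thesis using defi[OF that(1,3,4)] by auto
  qed
  have C: "lub_wrt le UNIV ((\<lambda>i. the (sm (\<phi> i) F)) ` I) (the (sm \<psi> F))" if "finite F" "F \<subseteq> A" for F
    using that
  proof (induction F rule: finite_induct)
    case empty
    have "(\<lambda>i. the (sm (\<phi> i) {})) ` I = {z}" using I by auto
    then show ?case using lub_singleton by simp
  next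
    case (insert x F)
    have FA: "F \<subseteq> A" "x \<in> A" using insert.prems by auto
    define \<Psi> where "\<Psi> = the (sm \<psi> F)"
    define \<Phi> where "\<Phi> i = the (sm (\<phi> i) F)" for i
    define T where "T = the (sm \<psi> (insert x F))"
    have fi: "finite (insert x F)" using insert.hyps(1) by simp
    have e1: "sm \<psi> (insert x F) = Some T" unfolding T_def using defpsi[OF fi insert.prems] .
    have e2: "sm \<psi> F = Some \<Psi>" unfolding \<Psi>_def using defpsi[OF insert.hyps(1) FA(1)] .
    have "addo (Some (\<psi> x)) (Some \<Psi>) = Some T" using e1 e2 sm_insert[OF insert.hyps(1,2), of \<psi>] by simp
    then have T: "add (\<psi> x) \<Psi> = Some T" by simp
    have Ti: "sm (\<phi> i) (insert x F) = add (\<phi> i x) (\<Phi> i)" if iI: "i \<in> I" for i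
    proof -
      obtain v where v: "sm (\<phi> i) F = Some v" using defi[OF iI insert.hyps(1) FA(1)] by blast
      then show ?thesis using sm_insert[OF insert.hyps(1,2), of "\<phi> i"] unfolding \<Phi>_def by simp
    qed
    have IH: "lub_wrt le UNIV (\<Phi> ` I) \<Psi>" using insert.IH FA(1) unfolding \<Phi>_def \<Psi>_def by blast
    have d1: "directed_wrt le ((\<lambda>i. \<phi> i x) ` I)"
      unfolding directed_wrt_def using I dir FA(2) by blast
    have d2: "directed_wrt le (\<Phi> ` I)"
    proof -
      have "\<exists>c\<in>\<Phi> ` I. \<Phi> i \<preceq> c \<and> \<Phi> j \<preceq> c" if ij: "i \<in> I" "j \<in> I" for i j
      proof -
        obtain k where k: "k \<in> I" "\<forall>x\<in>A. \<phi> i x \<preceq> \<phi> k x \<and> \<phi> j x \<preceq> \<phi> k x" using dir ij by blast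
        have "\<Phi> i \<preceq> \<Phi> k" unfolding \<Phi>_def using mono[OF ij(1) k(1) insert.hyps(1) FA(1)] k(2) by blast
        moreover have "\<Phi> j \<preceq> \<Phi> k" unfolding \<Phi>_def using mono[OF ij(2) k(1) insert.hyps(1) FA(1)] k(2) by blast
        ultimately show ?thesis using k(1) by blast
      qed
      then show ?thesis unfolding directed_wrt_def using I by blast
    qed
    have ub1: "\<phi> i x \<preceq> \<psi> x" if "i \<in> I" for i using lepsi that FA(2) by blast
    have ub2: "\<Phi> i \<preceq> \<Psi>" if "i \<in> I" for i using IH that unfolding lub_wrt_def by blast
    have df: "\<forall>a\<in>(\<lambda>i. \<phi> i x) ` I. \<forall>c\<in>\<Phi> ` I. add a c \<noteq> None"
    proof (intro ballI)
      fix a c assume "a \<in> (\<lambda>i. \<phi> i x) ` I" "c \<in> \<Phi> ` I"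
      then obtain i j where "i \<in> I" "j \<in> I" "a = \<phi> i x" "c = \<Phi> j" by blast
      then have "a \<preceq> \<psi> x" "c \<preceq> \<Psi>" using ub1 ub2 by auto
      then obtain c' where "add a c = Some c'" using add_mono T by blast
      then show "add a c \<noteq> None" by simp
    qed
    have lub1: "lub_wrt le UNIV ((\<lambda>i. \<phi> i x) ` I) (\<psi> x)" using lubs FA(2) by blast
    obtain t where t1: "add (\<psi> x) \<Psi> = Some t"
      and t2: "\<forall>a\<in>(\<lambda>i. \<phi> i x) ` I. \<forall>c\<in>\<Phi> ` I. the (add a c) \<preceq> t"
      and t3: "\<forall>b'. (\<forall>a\<in>(\<lambda>i. \<phi> i x) ` I. \<forall>c\<in>\<Phi> ` I. the (add a c) \<preceq> b') \<longrightarrow> t \<preceq> b'"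
      using lub_add2[OF d1 d2 lub1 IH df] by (elim exE conjE)
    note t = t1 t2 t3
    have tT: "t = T" using t(1) T by simp
    have up: "the (sm (\<phi> i) (insert x F)) \<preceq> T" if "i \<in> I" for i
      using t(2) tT Ti[OF that] that by auto
    have least: "T \<preceq> b'" if hb: "\<forall>i\<in>I. the (sm (\<phi> i) (insert x F)) \<preceq> b'" for b'
    proof -
      have "the (add a c) \<preceq> b'" if ac: "a \<in> (\<lambda>i. \<phi> i x) ` I" "c \<in> \<Phi> ` I" for a c
      proof -
        obtain i j where ij: "i \<in> I" "j \<in> I" "a = \<phi> i x" "c = \<Phi> j" using ac by blast
        obtain k where k: "k \<in> I" "\<forall>x\<in>A. \<phi> i x \<preceq> \<phi> k x \<and> \<phi> j x \<preceq> \<phi> k x" using dir ij by blast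
        have 1: "a \<preceq> \<phi> k x" using k FA(2) ij by blast
        have 2: "c \<preceq> \<Phi> k" unfolding ij \<Phi>_def using mono[OF ij(2) k(1) insert.hyps(1) FA(1)] k(2) by blast
        have "sm (\<phi> k) (insert x F) = Some (the (sm (\<phi> k) (insert x F)))"
          using defi[OF k(1) fi insert.prems] .
        then obtain Tk where Tk: "add (\<phi> k x) (\<Phi> k) = Some Tk" using Ti[OF k(1)] by auto
        have "the (sm (\<phi> k) (insert x F)) \<preceq> b'" using hb k(1) by blast
        then have "Tk \<preceq> b'" using Ti[OF k(1)] Tk by simp
        moreover obtain c' where "add a c = Some c'" "c' \<preceq> Tk" using add_mono[OF 1 2 Tk] by blast
        ultimately show ?thesis using le_trans by simp
      qed
      then show ?thesis using t(3) tT by blast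
    qed
    show ?case unfolding lub_wrt_def T_def[symmetric] using up least by blast
  qed
  show ?thesis
  proof (rule hp_least[OF hs])
    fix F t assume F: "finite F" "F \<subseteq> A" "sm \<psi> F = Some t"
    have "the (sm (\<phi> i) F) \<preceq> b" if iI: "i \<in> I" for i
    proof -
      obtain u where "sm (\<phi> i) F = Some u" "u \<preceq> psum add z (\<phi> i) A" using hp_le[OF hpi[OF iI] F(1,2)] by blast
      then show ?thesis using bnd iI le_trans by auto
    qed
    then have "the (sm \<psi> F) \<preceq> b" using C[OF F(1,2)] unfolding lub_wrt_def by blast
    then show "t \<preceq> b" using F(3) by simp
  qed
qed

definition tp where "tp = (SOME t. \<forall>u. u \<preceq> t)"

lemma le_tp: "u \<preceq> tp"
proof -
  have "\<exists>t. \<forall>u. u \<preceq> t" using htop unfolding has_top_def .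
  then have "\<forall>u. u \<preceq> tp" unfolding tp_def by (rule someI_ex)
  then show ?thesis by blast
qed

lemma W_mass: "m \<in> Wset add z \<Longrightarrow> supp z m \<subseteq> B \<Longrightarrow> \<exists>s. has_psum add z m B s"
proof -
  assume m: "m \<in> Wset add z" and B: "supp z m \<subseteq> B"
  obtain s where s: "has_psum add z m (supp z m) s" using m unfolding Wset_def by blast
  have "\<forall>x\<in>B - supp z m. m x = z" unfolding supp_def by blast
  then have "has_psum add z m B s" using hp_restrict[OF B] s by blast
  then show ?thesis by blast
qed

lemma W_fin: "m \<in> Wset add z \<Longrightarrow> finite F \<Longrightarrow> \<exists>v. sm m F = Some v"
proof -
  assume m: "m \<in> Wset add z" and F: "finite F"
  obtain s where "has_psum add z m UNIV s" using W_mass[OF m] by blast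
  then have "sm m F \<noteq> None" using hp_def F by blast
  then show ?thesis by blast
qed

lemma W_sub: "m \<in> Wset add z \<Longrightarrow> \<forall>y. m' y \<preceq> m y \<Longrightarrow> m' \<in> Wset add z"
proof -
  assume m: "m \<in> Wset add z" and le: "\<forall>y. m' y \<preceq> m y"
  have sub: "supp z m' \<subseteq> supp z m"
  proof
    fix y assume "y \<in> supp z m'"
    then have "m' y \<noteq> z" unfolding supp_def by blast
    then have "m y \<noteq> z" using le le_z by metis
    then show "y \<in> supp z m" unfolding supp_def by blast
  qed
  have c: "countable (supp z m')" using m sub countable_subset unfolding Wset_def by blast
  obtain s where s: "has_psum add z m (supp z m) s" using m unfolding Wset_def by blast
  obtain s' where s': "has_psum add z m' (supp z m) s'" using hp_sub[OF _ s, of m'] le by blast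
  have "\<forall>x\<in>supp z m - supp z m'. m' x = z" unfolding supp_def by blast
  then have "has_psum add z m' (supp z m') s'" using hp_restrict[OF sub] s' by blast
  then show ?thesis using c unfolding Wset_def by blast
qed

lemma W_le_pt: "W_le add z m1 m2 \<Longrightarrow> m1 y \<preceq> m2 y"
  unfolding W_le_def using add_le1 by blast

lemma W_le_iff: "m2 \<in> Wset add z \<Longrightarrow> W_le add z m1 m2 \<longleftrightarrow> (\<forall>y. m1 y \<preceq> m2 y)"
proof
  assume h: "W_le add z m1 m2" show "\<forall>y. m1 y \<preceq> m2 y"
  proof
    fix y show "m1 y \<preceq> m2 y" using W_le_pt[OF h] .
  qed
next
  assume m2: "m2 \<in> Wset add z" and le: "\<forall>y. m1 y \<preceq> m2 y"
  define d where "d y = (SOME w. add (m1 y) w = Some (m2 y))" for y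
  have d: "add (m1 y) (d y) = Some (m2 y)" for y
  proof -
    have "\<exists>w. add (m1 y) w = Some (m2 y)" using le unfolding ps_le_def by blast
    then show ?thesis unfolding d_def by (rule someI_ex)
  qed
  have "\<forall>y. d y \<preceq> m2 y" using d add_le2 by blast
  then have "d \<in> Wset add z" using W_sub[OF m2] by blast
  then show "W_le add z m1 m2" unfolding W_le_def using d by blast
qed

lemma dag_hp: "m \<in> Wset add z \<Longrightarrow>
   has_psum add z (\<lambda>x. mul (m x) (g x y)) (supp z m) (dagger add mul z g m y)"
proof -
  assume m: "m \<in> Wset add z"
  obtain M where M: "has_psum add z m (supp z m) M" using m unfolding Wset_def by blast
  have Mt: "has_psum add z (\<lambda>x. mul (m x) tp) (supp z m) (mul M tp)" by (rule hp_mult_r[OF M])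
  have le: "\<forall>x\<in>supp z m. mul (m x) (g x y) \<preceq> mul (m x) tp"
  proof
    fix x show "mul (m x) (g x y) \<preceq> mul (m x) tp" by (rule mul_mono_l[OF le_tp])
  qed
  obtain s where s: "has_psum add z (\<lambda>x. mul (m x) (g x y)) (supp z m) s"
    using hp_sub[OF le Mt] by blast
  have "dagger add mul z g m y = s" unfolding dagger_def using psum_eq[OF s] by simp
  then show ?thesis using s by simp
qed

lemma dag_W: "g \<in> Kleisli_dom add z \<Longrightarrow> m \<in> Wset add z \<Longrightarrow> dagger add mul z g m \<in> Wset add z"
proof -
  assume g: "g \<in> Kleisli_dom add z" and m: "m \<in> Wset add z"
  have gW: "g x \<in> Wset add z" for x using g unfolding Kleisli_dom_def by blast
  have sub: "supp z (dagger add mul z g m) \<subseteq> (\<Union>x\<in>supp z m. supp z (g x))"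
  proof
    fix y assume y: "y \<in> supp z (dagger add mul z g m)"
    show "y \<in> (\<Union>x\<in>supp z m. supp z (g x))"
    proof (rule ccontr)
      assume "y \<notin> (\<Union>x\<in>supp z m. supp z (g x))"
      then have "\<forall>x\<in>supp z m. g x y = z" unfolding supp_def by blast
      then have "\<forall>x\<in>supp z m. mul (m x) (g x y) = z" by simp
      then have "has_psum add z (\<lambda>x. mul (m x) (g x y)) (supp z m) z" by (rule hp_allz)
      then have "dagger add mul z g m y = z" using hp_unique[OF dag_hp[OF m, of g y]] by blast
      then show False using y unfolding supp_def by blast
    qed
  qed
  have cm: "countable (supp z m)" using m unfolding Wset_def by blast
  have "countable (\<Union>x\<in>supp z m. supp z (g x))"
  proof (rule countable_UN[OF cm])
    fix x show "countable (supp z (g x))" using gW[of x] unfolding Wset_def by blast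
  qed
  then have c: "countable (supp z (dagger add mul z g m))" using sub countable_subset by blast
  obtain M where M: "has_psum add z m (supp z m) M" using m unfolding Wset_def by blast
  have Mt: "has_psum add z (\<lambda>x. mul (m x) tp) (supp z m) (mul M tp)" by (rule hp_mult_r[OF M])
  have "sm (dagger add mul z g m) F \<noteq> None" if F: "finite F" for F
  proof -
    define q where "q x = mul (m x) (the (sm (g x) F))" for x
    have q: "sm (\<lambda>y. mul (m x) (g x y)) F = Some (q x)" for x
    proof -
      obtain v where v: "sm (g x) F = Some v" using W_fin[OF gW F] by blast
      show ?thesis using sm_mult_l[OF F v, of "m x"] v unfolding q_def by simp
    qed
    have "\<forall>x\<in>supp z m. q x \<preceq> mul (m x) tp"
    proof
      fix x show "q x \<preceq> mul (m x) tp" unfolding q_def by (rule mul_mono_l[OF le_tp])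
    qed
    then obtain s where s: "has_psum add z q (supp z m) s" using hp_sub[OF _ Mt] by blast
    have "sm (dagger add mul z g m) F = Some s"
      by (rule hp_swap[of F "\<lambda>x y. mul (m x) (g x y)" "supp z m" "dagger add mul z g m" q s])
        (use F dag_hp[OF m] q s in auto)
    then show ?thesis by simp
  qed
  then have "\<forall>F. finite F \<and> F \<subseteq> supp z (dagger add mul z g m) \<longrightarrow> sm (dagger add mul z g m) F \<noteq> None"
    by blast
  then obtain s where "has_psum add z (dagger add mul z g m) (supp z (dagger add mul z g m)) s"
    using hp_exists by blast
  then show ?thesis using c unfolding Wset_def by blast
qed

lemma fun_le_iff: "g \<in> Kleisli_dom add z \<Longrightarrow> fun_le add z f g \<longleftrightarrow> (\<forall>x y. f x y \<preceq> g x y)"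
  unfolding fun_le_def Kleisli_dom_def using W_le_iff by blast

theorem main:
  fixes D :: "('x \<Rightarrow> 'y \<Rightarrow> 'u) set" and S :: "'x \<Rightarrow> 'y \<Rightarrow> 'u"
  assumes Dd: "D \<subseteq> Kleisli_dom add z"
    and dir: "directed_wrt (fun_le add z) D"
    and lubS: "lub_wrt (fun_le add z) (Kleisli_dom add z) D S"
  shows "lub_wrt (kfun_le add z) (Kleisli_cod add z) (dagger add mul z ` D) (dagger add mul z S)"
proof -
  have Sd: "S \<in> Kleisli_dom add z" using lubS unfolding lub_wrt_def by blast
  have upS: "f x y \<preceq> S x y" if "f \<in> D" for f x y
    using lubS that fun_le_iff[OF Sd] unfolding lub_wrt_def by blast
  have Dne: "D \<noteq> {}" using dir unfolding directed_wrt_def by blast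
  have dirD: "\<exists>h\<in>D. (\<forall>x y. f x y \<preceq> h x y) \<and> (\<forall>x y. g x y \<preceq> h x y)" if fgD: "f \<in> D" "g \<in> D" for f g
  proof -
    obtain h where h: "h \<in> D" "fun_le add z f h" "fun_le add z g h" using dir fgD unfolding directed_wrt_def by blast
    then have "h \<in> Kleisli_dom add z" using Dd by blast
    then show ?thesis using h fun_le_iff by blast
  qed
  have dxy: "directed_wrt le ((\<lambda>f. f x y) ` D)" for x y
  proof -
    have "\<exists>c\<in>(\<lambda>f. f x y) ` D. a \<preceq> c \<and> b \<preceq> c" if ab: "a \<in> (\<lambda>f. f x y) ` D" "b \<in> (\<lambda>f. f x y) ` D" for a b
    proof -
      obtain f g where fg: "f \<in> D" "g \<in> D" "a = f x y" "b = g x y" using ab by blast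
      obtain h where "h \<in> D" "\<forall>x y. f x y \<preceq> h x y" "\<forall>x y. g x y \<preceq> h x y" using dirD[OF fg(1,2)] by blast
      then show ?thesis using fg by blast
    qed
    then show ?thesis unfolding directed_wrt_def using Dne by blast
  qed
  define T where "T x y = (SOME t. lub_wrt le UNIV ((\<lambda>f. f x y) ` D) t)" for x y
  have lubT: "lub_wrt le UNIV ((\<lambda>f. f x y) ` D) (T x y)" for x y
  proof -
    have "\<exists>t. lub_wrt le UNIV ((\<lambda>f. f x y) ` D) t" using scott_sup[OF dxy] .
    then show ?thesis unfolding T_def by (rule someI_ex)
  qed
  have TS: "T x y \<preceq> S x y" for x y
    using lubT[of x y] upS unfolding lub_wrt_def by blast
  have Td: "T \<in> Kleisli_dom add z"
  proof -
    have "T x \<in> Wset add z" for x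
      using W_sub[of "S x" "T x"] Sd TS unfolding Kleisli_dom_def by blast
    then show ?thesis unfolding Kleisli_dom_def by blast
  qed
  have "fun_le add z f T" if "f \<in> D" for f
    using fun_le_iff[OF Td] lubT that unfolding lub_wrt_def by blast
  then have "fun_le add z S T" using lubS Td unfolding lub_wrt_def by blast
  then have "S x y \<preceq> T x y" for x y using fun_le_iff[OF Td] by blast
  then have ST: "S x y = T x y" for x y using le_antisym[OF _ TS] by blast
  have ptlub: "lub_wrt le UNIV ((\<lambda>f. f x y) ` D) (S x y)" for x y using lubT ST by simp
  have c1: "dagger add mul z S \<in> Kleisli_cod add z"
    unfolding Kleisli_cod_def using dag_W[OF Sd] by blast
  have c2: "kfun_le add z (dagger add mul z f) (dagger add mul z S)" if f: "f \<in> D" for f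
    unfolding kfun_le_def
  proof
    fix m :: "'x \<Rightarrow> 'u" assume m: "m \<in> Wset add z"
    have "dagger add mul z f m y \<preceq> dagger add mul z S m y" for y
    proof -
      have lef: "\<forall>x\<in>supp z m. mul (m x) (f x y) \<preceq> mul (m x) (S x y)" using upS[OF f] mul_mono_l by blast
      then obtain s where s: "has_psum add z (\<lambda>x. mul (m x) (f x y)) (supp z m) s" "s \<preceq> dagger add mul z S m y"
        using hp_sub[OF lef dag_hp[OF m, of S y]] by blast
      have "s = dagger add mul z f m y" using hp_unique[OF s(1) dag_hp[OF m, of f y]] .
      then show ?thesis using s(2) by simp
    qed
    then show "W_le add z (dagger add mul z f m) (dagger add mul z S m)"
      using W_le_iff[OF dag_W[OF Sd m]] by blast
  qed
  have c3: "kfun_le add z (dagger add mul z S) G"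
    if G: "G \<in> Kleisli_cod add z" and ub: "\<forall>F\<in>dagger add mul z ` D. kfun_le add z F G" for G
    unfolding kfun_le_def
  proof
    fix m :: "'x \<Rightarrow> 'u" assume m: "m \<in> Wset add z"
    have GW: "G m \<in> Wset add z" using G m unfolding Kleisli_cod_def by blast
    have "dagger add mul z S m y \<preceq> G m y" for y
    proof (rule hp_sup[of D "supp z m" "\<lambda>f x. mul (m x) (f x y)" "\<lambda>x. mul (m x) (S x y)"])
      show "D \<noteq> {}" by (rule Dne)
      show "\<forall>i\<in>D. \<forall>j\<in>D. \<exists>k\<in>D. \<forall>x\<in>supp z m. mul (m x) (i x y) \<preceq> mul (m x) (k x y) \<and> mul (m x) (j x y) \<preceq> mul (m x) (k x y)"
      proof (intro ballI)
        fix i j assume "i \<in> D" "j \<in> D"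
        then obtain k where k: "k \<in> D" "\<forall>x y. i x y \<preceq> k x y" "\<forall>x y. j x y \<preceq> k x y" using dirD by blast
        have "\<forall>x\<in>supp z m. mul (m x) (i x y) \<preceq> mul (m x) (k x y) \<and> mul (m x) (j x y) \<preceq> mul (m x) (k x y)"
        proof
          fix x show "mul (m x) (i x y) \<preceq> mul (m x) (k x y) \<and> mul (m x) (j x y) \<preceq> mul (m x) (k x y)"
            using mul_mono_l[OF k(2)[rule_format, of x y]] mul_mono_l[OF k(3)[rule_format, of x y]] by blast
        qed
        then show "\<exists>k\<in>D. \<forall>x\<in>supp z m. mul (m x) (i x y) \<preceq> mul (m x) (k x y) \<and> mul (m x) (j x y) \<preceq> mul (m x) (k x y)"
          using k(1) by blast
      qed
      show "\<forall>x\<in>supp z m. lub_wrt le UNIV ((\<lambda>i. mul (m x) (i x y)) ` D) (mul (m x) (S x y))"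
      proof
        fix x
        have "(\<lambda>i. mul (m x) (i x y)) ` D = (\<lambda>v. mul (m x) v) ` ((\<lambda>f. f x y) ` D)" by (simp add: image_image)
        then show "lub_wrt le UNIV ((\<lambda>i. mul (m x) (i x y)) ` D) (mul (m x) (S x y))"
          using scott_mul_l[OF dxy ptlub] by simp
      qed
      show "has_psum add z (\<lambda>x. mul (m x) (S x y)) (supp z m) (dagger add mul z S m y)" by (rule dag_hp[OF m])
      show "\<forall>i\<in>D. psum add z (\<lambda>x. mul (m x) (i x y)) (supp z m) \<preceq> G m y"
      proof
        fix i assume i: "i \<in> D"
        then have "kfun_le add z (dagger add mul z i) G" using ub by blast
        then have "W_le add z (dagger add mul z i m) (G m)" using m unfolding kfun_le_def by blast
        then have "dagger add mul z i m y \<preceq> G m y" by (rule W_le_pt)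
        then show "psum add z (\<lambda>x. mul (m x) (i x y)) (supp z m) \<preceq> G m y" unfolding dagger_def .
      qed
    qed
    then show "W_le add z (dagger add mul z S m) (G m)" using W_le_iff[OF GW] by blast
  qed
  show ?thesis unfolding lub_wrt_def using c1 c2 c3 by blast
qed

end

theorem lemmaA4:
  fixes add :: "'u \<Rightarrow> 'u \<Rightarrow> 'u option" and mul :: "'u \<Rightarrow> 'u \<Rightarrow> 'u" and z one :: 'u
    and D :: "('x \<Rightarrow> 'y \<Rightarrow> 'u) set" and S :: "'x \<Rightarrow> 'y \<Rightarrow> 'u"
  assumes "partial_semiring add mul z one"
    and "naturally_ordered add"
    and "ps_scott_continuous add mul"
    and "has_top add"
    and "D \<subseteq> Kleisli_dom add z"
    and "directed_wrt (fun_le add z) D"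
    and "lub_wrt (fun_le add z) (Kleisli_dom add z) D S"
  shows "lub_wrt (kfun_le add z) (Kleisli_cod add z) (dagger add mul z ` D) (dagger add mul z S)"
proof -
  interpret psr add mul z one using assms(1-4) by (unfold_locales)
  show ?thesis using main assms(5-7) by blast
qed

end
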